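(* For any finite alphabet $\mathfrak{G}$, the set of co-irreducible elements of the $\mathfrak{G}$-prefix poset is the set of all stringy $\mathfrak{G}$-trees. Moreover, the number of such elements of degree $d\geq 1$ is $\mathcal{R}_\mathfrak{G}(1)\,\mathcal{R}'_\mathfrak{G}(1)^{d-1}$, that is $(\#\mathfrak{G})\,\big(\sum_{\mathtt{a}\in\mathfrak{G}}|\mathtt{a}|\big)^{d-1}$.
   Context: $\mathfrak{G}$ is a finite alphabet (letters with arities $|\mathtt{a}|\geq 1$), and $\mathcal{R}_\mathfrak{G}(t) = \sum_{\mathtt{a}\in\mathfrak{G}} t^{|\mathtt{a}|}$ with derivative $\mathcal{R}'_\mathfrak{G}$. A $\mathfrak{G}$-tree is either the leaf (the tree with no internal node) or a root decorated by a letter $\mathtt{a}\in\mathfrak{G}$ with $|\mathtt{a}|$ children that are $\mathfrak{G}$-trees; its degree is its number of internal nodes. The $\mathfrak{G}$-prefix poset is the set of $\mathfrak{G}$-trees ordered by $\mathfrak{s}\preceq\mathfrak{t}$ iff $\mathfrak{t}$ is obtained by grafting some $\mathfrak{G}$-trees onto the leaves of $\mathfrak{s}$; its covering relation consists in replacing a leaf by an internal node all of whose children are leaves. A tree is co-irreducible if it covers at most one element. A $\mathfrak{G}$-tree is stringy if each of its internal nodes has at most one child that is an internal node. *)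

theory Defs
  imports Main
begin

datatype 'a gtree = Leaf | Node 'a "'a gtree list"

fun is_gtree :: "'a set \<Rightarrow> ('a \<Rightarrow> nat) \<Rightarrow> 'a gtree \<Rightarrow> bool" where
  "is_gtree G ar Leaf = True"
| "is_gtree G ar (Node a ts) =
     (a \<in> G \<and> length ts = ar a \<and> (\<forall>t\<in>set ts. is_gtree G ar t))"

fun degree :: "'a gtree \<Rightarrow> nat" where
  "degree Leaf = 0"
| "degree (Node a ts) = Suc (sum_list (map degree ts))"

text \<open>Prefix order: t is obtained from s by grafting trees onto leaves of s.\<close>
inductive prefix_le :: "'a gtree \<Rightarrow> 'a gtree \<Rightarrow> bool" where
  leaf: "prefix_le Leaf t"
| node: "list_all2 prefix_le ss ts \<Longrightarrow> prefix_le (Node a ss) (Node a ts)"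
monos list_all2_mono

definition prefix_lt :: "'a gtree \<Rightarrow> 'a gtree \<Rightarrow> bool" where
  "prefix_lt s t \<longleftrightarrow> prefix_le s t \<and> s \<noteq> t"

definition covers :: "'a set \<Rightarrow> ('a \<Rightarrow> nat) \<Rightarrow> 'a gtree \<Rightarrow> 'a gtree \<Rightarrow> bool" where
  "covers G ar t s \<longleftrightarrow> is_gtree G ar s \<and> is_gtree G ar t \<and> prefix_lt s t \<and>
     \<not> (\<exists>u. is_gtree G ar u \<and> prefix_lt s u \<and> prefix_lt u t)"

definition co_irreducible :: "'a set \<Rightarrow> ('a \<Rightarrow> nat) \<Rightarrow> 'a gtree \<Rightarrow> bool" where
  "co_irreducible G ar t \<longleftrightarrow>
     (\<forall>s1 s2. covers G ar t s1 \<and> covers G ar t s2 \<longrightarrow> s1 = s2)"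

definition is_internal :: "'a gtree \<Rightarrow> bool" where
  "is_internal t \<longleftrightarrow> t \<noteq> Leaf"

fun stringy :: "'a gtree \<Rightarrow> bool" where
  "stringy Leaf = True"
| "stringy (Node a ts) =
     (length (filter is_internal ts) \<le> 1 \<and> (\<forall>t\<in>set ts. stringy t))"

end

theory Submission
  imports Defs
begin

inductive ispred :: "'a gtree \<Rightarrow> 'a gtree \<Rightarrow> bool" where
  bot: "\<forall>t\<in>set ts. t = Leaf \<Longrightarrow> ispred (Node a ts) Leaf"
| sub: "i < length ts \<Longrightarrow> ispred (ts!i) s \<Longrightarrow> ispred (Node a ts) (Node a (ts[i:=s]))"

lemma ispred_Leaf[simp]: "\<not> ispred Leaf s"
  by (auto elim: ispred.cases)

lemma prefix_le_refl: "prefix_le t t"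
proof (induction t)
  case Leaf thus ?case by (rule prefix_le.leaf)
next
  case (Node a ts)
  have "list_all2 prefix_le ts ts" using Node.IH by (auto simp: list_all2_conv_all_nth)
  thus ?case by (rule prefix_le.node)
qed

lemma sum_list_map_update:
  "i < length xs \<Longrightarrow> sum_list (map (f::_\<Rightarrow>nat) (xs[i:=x])) + f (xs!i) = sum_list (map f xs) + f x"
proof (induction xs arbitrary: i)
  case Nil thus ?case by simp
next
  case (Cons y ys) thus ?case by (cases i) auto
qed

lemma ispred_props:
  "ispred t s \<Longrightarrow> prefix_le s t \<and> degree t = Suc (degree s) \<and> (is_gtree G ar t \<longrightarrow> is_gtree G ar s)"
proof (induction rule: ispred.induct)
  case (bot ts a)
  have "sum_list (map degree ts) = 0" using bot by auto
  thus ?case by (simp add: prefix_le.leaf)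
next
  case (sub i ts s a)
  have "list_all2 prefix_le (ts[i:=s]) ts"
  proof -
    have "list_all2 prefix_le ts ts" by (simp add: list_all2_refl prefix_le_refl)
    hence "list_all2 prefix_le (ts[i:=s]) (ts[i:=ts!i])"
      using sub by (intro list_all2_update_cong) auto
    thus ?thesis by simp
  qed
  moreover have "degree (Node a ts) = Suc (degree (Node a (ts[i:=s])))"
    using sum_list_map_update[OF sub.hyps(1), of degree s] sub.IH by simp
  moreover have "is_gtree G ar (Node a ts) \<longrightarrow> is_gtree G ar (Node a (ts[i:=s]))"
    using sub by (auto dest!: set_update_subset_insert[THEN subsetD])
  ultimately show ?case by (auto intro: prefix_le.node)
qed

lemma degree_0_iff[simp]: "degree t = 0 \<longleftrightarrow> t = Leaf"
  by (cases t) auto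

lemma list_all2_sum:
  assumes "list_all2 (\<lambda>x y. (f::_\<Rightarrow>nat) x \<le> f y \<and> (f x = f y \<longrightarrow> x = y)) xs ys"
  shows "sum_list (map f xs) \<le> sum_list (map f ys) \<and> (sum_list (map f xs) = sum_list (map f ys) \<longrightarrow> xs = ys)"
  using assms by (induction rule: list_all2_induct) auto

lemma prefix_le_degree:
  "prefix_le s t \<Longrightarrow> degree s \<le> degree t \<and> (degree s = degree t \<longrightarrow> s = t)"
proof (induction rule: prefix_le.induct)
  case (leaf t) thus ?case by auto
next
  case (node ss ts a)
  have "list_all2 (\<lambda>x y. degree x \<le> degree y \<and> (degree x = degree y \<longrightarrow> x = y)) ss ts"
    using node by (rule list_all2_mono) auto
  from list_all2_sum[OF this] show ?case by auto
qed

lemma prefix_lt_degree: "prefix_lt s t \<Longrightarrow> degree s < degree t"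
  using prefix_le_degree unfolding prefix_lt_def by fastforce

lemma ex_pred: "t \<noteq> Leaf \<Longrightarrow> \<exists>s. ispred t s"
proof (induction t)
  case Leaf thus ?case by simp
next
  case (Node a ts)
  show ?case
  proof (cases "\<forall>t\<in>set ts. t = Leaf")
    case True thus ?thesis by (blast intro: ispred.bot)
  next
    case False
    then obtain i where i: "i < length ts" "ts!i \<noteq> Leaf" by (auto simp: in_set_conv_nth)
    then obtain s where "ispred (ts!i) s" using Node.IH[of "ts!i"] by auto
    thus ?thesis using i by (blast intro: ispred.sub)
  qed
qed

lemma lt_pred0: "prefix_le s t \<Longrightarrow> s \<noteq> t \<Longrightarrow> \<exists>u. ispred t u \<and> prefix_le s u"
proof (induction s t rule: prefix_le.induct)
  case (leaf t)
  hence "t \<noteq> Leaf" by simp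
  then obtain u where "ispred t u" using ex_pred by blast
  thus ?case by (blast intro: prefix_le.leaf)
next
  case (node ss ts a)
  have len: "length ss = length ts" using node(1) by (rule list_all2_lengthD)
  have "ss \<noteq> ts" using node(2) by simp
  have "\<exists>i<length ts. ss!i \<noteq> ts!i"
  proof (rule ccontr)
    assume "\<not> (\<exists>i<length ts. ss!i \<noteq> ts!i)"
    hence "ss = ts" using len by (intro nth_equalityI) auto
    thus False using \<open>ss \<noteq> ts\<close> by simp
  qed
  then obtain i where i: "i < length ts" "ss!i \<noteq> ts!i" by blast
  have "prefix_le (ss!i) (ts!i) \<and> ((ss!i) \<noteq> (ts!i) \<longrightarrow> (\<exists>u. ispred (ts!i) u \<and> prefix_le (ss!i) u))"
    using list_all2_nthD[OF node(1)] i len by simp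
  then obtain u where u: "ispred (ts!i) u" "prefix_le (ss!i) u" using i by blast
  have "list_all2 prefix_le ss ts" using node(1) by (rule list_all2_mono) auto
  hence "list_all2 prefix_le (ss[i:=ss!i]) (ts[i:=u])"
    using u by (intro list_all2_update_cong) auto
  hence "prefix_le (Node a ss) (Node a (ts[i:=u]))" by (simp add: prefix_le.node)
  thus ?case using i u by (blast intro: ispred.sub)
qed

lemma lt_pred: "prefix_lt s t \<Longrightarrow> \<exists>u. ispred t u \<and> prefix_le s u"
  using lt_pred0 unfolding prefix_lt_def by blast

lemma covers_iff:
  "covers G ar t s \<longleftrightarrow> is_gtree G ar t \<and> ispred t s"
proof
  assume c: "covers G ar t s"
  hence lt: "prefix_lt s t" and g: "is_gtree G ar t" and nb: "\<not> (\<exists>u. is_gtree G ar u \<and> prefix_lt s u \<and> prefix_lt u t)"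
    unfolding covers_def by blast+
  obtain u where u: "ispred t u" "prefix_le s u" using lt_pred[OF lt] by blast
  have pu: "prefix_le u t" "degree t = Suc (degree u)" "is_gtree G ar t \<longrightarrow> is_gtree G ar u"
    using ispred_props[OF u(1), of G ar] by blast+
  have "s = u"
  proof (rule ccontr)
    assume "s \<noteq> u"
    hence "prefix_lt s u" using u(2) unfolding prefix_lt_def by blast
    moreover have "prefix_lt u t" using pu(1,2) unfolding prefix_lt_def by auto
    moreover have "is_gtree G ar u" using pu(3) g by blast
    ultimately show False using nb by blast
  qed
  thus "is_gtree G ar t \<and> ispred t s" using g u by simp
next
  assume a: "is_gtree G ar t \<and> ispred t s"
  have p: "prefix_le s t" "degree t = Suc (degree s)" "is_gtree G ar s"
    using ispred_props[of t s G ar] a by blast+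
  have "prefix_lt s t" using p(1,2) unfolding prefix_lt_def by auto
  moreover have "\<not> (\<exists>u. prefix_lt s u \<and> prefix_lt u t)"
  proof
    assume "\<exists>u. prefix_lt s u \<and> prefix_lt u t"
    then obtain u where "prefix_lt s u" "prefix_lt u t" by blast
    hence "degree s < degree u" "degree u < degree t" using prefix_lt_degree by auto
    thus False using p(2) by simp
  qed
  ultimately show "covers G ar t s" using a p unfolding covers_def by blast
qed

lemma two_internal:
  assumes "length (filter is_internal ts) \<le> 1" "i < length ts" "j < length ts"
    "ts!i \<noteq> Leaf" "ts!j \<noteq> Leaf"
  shows "i = j"
proof (rule ccontr)
  assume "i \<noteq> j"
  have "{i, j} \<subseteq> {k. k < length ts \<and> is_internal (ts!k)}"
    using assms by (auto simp: is_internal_def)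
  hence "card {i, j} \<le> card {k. k < length ts \<and> is_internal (ts!k)}"
    by (intro card_mono) auto
  thus False using assms(1) \<open>i \<noteq> j\<close> by (simp add: length_filter_conv_card)
qed

lemma ispred_NodeE:
  assumes "ispred (Node a ts) s"
  obtains "\<forall>t\<in>set ts. t = Leaf" "s = Leaf"
  | i u where "i < length ts" "ispred (ts!i) u" "s = Node a (ts[i:=u])"
  using assms by (cases rule: ispred.cases) auto

lemma stringy_unique: "stringy t \<Longrightarrow> ispred t s1 \<Longrightarrow> ispred t s2 \<Longrightarrow> s1 = s2"
proof (induction t arbitrary: s1 s2)
  case Leaf thus ?case by simp
next
  case (Node a ts)
  show ?case
  proof (cases "\<forall>t\<in>set ts. t = Leaf")
    case True
    have "s = Leaf" if "ispred (Node a ts) s" for s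
      using that
    proof (cases rule: ispred_NodeE)
      case (2 i u)
      hence "ts!i = Leaf" using True nth_mem[OF 2(1)] by blast
      thus ?thesis using 2 by simp
    qed
    thus ?thesis using Node.prems by auto
  next
    case False
    obtain i u where iu: "i < length ts" "ispred (ts!i) u" "s1 = Node a (ts[i:=u])"
      using Node.prems(2) False by (cases rule: ispred_NodeE) auto
    obtain j v where jv: "j < length ts" "ispred (ts!j) v" "s2 = Node a (ts[j:=v])"
      using Node.prems(3) False by (cases rule: ispred_NodeE) auto
    have "ts!i \<noteq> Leaf" "ts!j \<noteq> Leaf" using iu jv by auto
    hence "i = j" using two_internal[of ts i j] Node.prems(1) iu jv by simp
    moreover have "u = v" using Node.IH[OF nth_mem[OF iu(1)]] Node.prems(1) iu jv \<open>i = j\<close>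
      by (meson nth_mem stringy.simps(2))
    ultimately show ?thesis using iu jv by simp
  qed
qed

lemma ispred_neq: "ispred t s \<Longrightarrow> s \<noteq> t"
  using ispred_props[of t s] by fastforce

lemma nonstringy_two: "\<not> stringy t \<Longrightarrow> \<exists>s1 s2. ispred t s1 \<and> ispred t s2 \<and> s1 \<noteq> s2"
proof (induction t)
  case Leaf thus ?case by simp
next
  case (Node a ts)
  show ?case
  proof (cases "length (filter is_internal ts) \<le> 1")
    case False
    hence "2 \<le> card {k. k < length ts \<and> is_internal (ts!k)}"
      by (simp add: length_filter_conv_card)
    then obtain i j where ij: "i \<in> {k. k < length ts \<and> is_internal (ts!k)}"
      "j \<in> {k. k < length ts \<and> is_internal (ts!k)}" "i \<noteq> j"
      by (metis (no_types, lifting) One_nat_def Suc_1 card_le_Suc_iff not_less_eq_eq card_0_eq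
          empty_iff finite_insert insert_iff le_zero_eq nat.distinct(1))
    obtain u where u: "ispred (ts!i) u" using ex_pred ij by (auto simp: is_internal_def)
    obtain v where v: "ispred (ts!j) v" using ex_pred ij by (auto simp: is_internal_def)
    have "(ts[i:=u])!i \<noteq> (ts[j:=v])!i" using ij ispred_neq[OF u] by simp
    hence "Node a (ts[i:=u]) \<noteq> Node a (ts[j:=v])" by auto
    thus ?thesis using u v ij by (blast intro: ispred.sub)
  next
    case True
    then obtain t where t: "t \<in> set ts" "\<not> stringy t" using Node.prems by auto
    then obtain i where i: "i < length ts" "ts!i = t" by (auto simp: in_set_conv_nth)
    obtain u v where uv: "ispred t u" "ispred t v" "u \<noteq> v" using Node.IH t by blast
    have "Node a (ts[i:=u]) \<noteq> Node a (ts[i:=v])" using i uv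
      by (metis gtree.inject nth_list_update_eq)
    thus ?thesis using uv i by (blast intro: ispred.sub)
  qed
qed

lemma coirr_iff: "is_gtree G ar t \<Longrightarrow> co_irreducible G ar t \<longleftrightarrow> stringy t"
  unfolding co_irreducible_def covers_iff
  using stringy_unique nonstringy_two by blast


lemma filter_rep_Leaf[simp]: "filter is_internal (replicate n Leaf) = []"
  by (induction n) (auto simp: is_internal_def)

definition rep :: "'a \<Rightarrow> nat \<Rightarrow> nat \<Rightarrow> 'a gtree \<Rightarrow> 'a gtree" where
  "rep a n i t = Node a ((replicate n Leaf)[i:=t])"

lemma degree_rep: "i < n \<Longrightarrow> degree (rep a n i t) = Suc (degree t)"
  using sum_list_map_update[of i "replicate n Leaf" degree t] by (simp add: rep_def)

lemma stringy_rep: "i < n \<Longrightarrow> stringy t \<Longrightarrow> stringy (rep a n i t)"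
proof -
  assume a: "i < n" "stringy t"
  have "{k. k < n \<and> is_internal ((replicate n Leaf)[i:=t] ! k)} \<subseteq> {i}"
    apply (clarsimp simp: is_internal_def)
    by (metis nth_list_update_neq nth_replicate)
  hence "card {k. k < n \<and> is_internal ((replicate n Leaf)[i:=t] ! k)} \<le> 1"
    by (metis card.empty card_insert_disjoint card_mono empty_iff finite.emptyI finite.insertI One_nat_def)
  moreover have "\<forall>x\<in>set ((replicate n Leaf)[i:=t]). stringy x"
    using a by (auto dest!: set_update_subset_insert[THEN subsetD])
  ultimately show ?thesis by (simp add: rep_def length_filter_conv_card)
qed

lemma gtree_rep: "a \<in> G \<Longrightarrow> is_gtree G ar t \<Longrightarrow> is_gtree G ar (rep a (ar a) i t)"
  by (auto simp: rep_def dest!: set_update_subset_insert[THEN subsetD])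

definition B :: "'a set \<Rightarrow> ('a \<Rightarrow> nat) \<Rightarrow> nat \<Rightarrow> 'a gtree set" where
  "B G ar d = {t. is_gtree G ar t \<and> stringy t \<and> degree t = d}"

lemma B1: "B G ar 1 = (\<lambda>a. Node a (replicate (ar a) Leaf)) ` G"
proof
  show "B G ar 1 \<subseteq> (\<lambda>a. Node a (replicate (ar a) Leaf)) ` G"
  proof
    fix t assume t: "t \<in> B G ar 1"
    then obtain a ts where at: "t = Node a ts" by (cases t) (auto simp: B_def)
    have "\<forall>x\<in>set ts. x = Leaf" using t at by (auto simp: B_def)
    hence "ts = replicate (length ts) Leaf" by (simp add: replicate_length_same)
    thus "t \<in> (\<lambda>a. Node a (replicate (ar a) Leaf)) ` G" using t at by (auto simp: B_def)
  qed
next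
  show "(\<lambda>a. Node a (replicate (ar a) Leaf)) ` G \<subseteq> B G ar 1"
    by (auto simp: B_def)
qed

lemma BSuc: "B G ar (Suc (Suc k)) = (\<lambda>(a,i,t). rep a (ar a) i t) ` (SIGMA a:G. {..<ar a} \<times> B G ar (Suc k))"
proof
  show "B G ar (Suc (Suc k)) \<subseteq> (\<lambda>(a,i,t). rep a (ar a) i t) ` (SIGMA a:G. {..<ar a} \<times> B G ar (Suc k))"
  proof
    fix t assume t: "t \<in> B G ar (Suc (Suc k))"
    then obtain a ts where at: "t = Node a ts" by (cases t) (auto simp: B_def)
    have g: "a \<in> G" "length ts = ar a" "\<forall>x\<in>set ts. is_gtree G ar x \<and> stringy x"
      "length (filter is_internal ts) \<le> 1" using t at by (auto simp: B_def)
    have "\<not> (\<forall>x\<in>set ts. x = Leaf)"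
    proof
      assume "\<forall>x\<in>set ts. x = Leaf"
      hence "sum_list (map degree ts) = 0" by auto
      moreover have "sum_list (map degree ts) = Suc k" using t at by (simp add: B_def)
      ultimately show False by simp
    qed
    then obtain i where i: "i < length ts" "ts!i \<noteq> Leaf" by (auto simp: in_set_conv_nth)
    have others: "j < length ts \<Longrightarrow> j \<noteq> i \<Longrightarrow> ts!j = Leaf" for j
      using two_internal[OF g(4) i(1), of j] i by auto
    have eq: "ts = (replicate (ar a) Leaf)[i:=ts!i]"
      by (rule nth_equalityI) (use g(2) others i(1) in \<open>auto simp: nth_list_update\<close>)
    hence "t = rep a (ar a) i (ts!i)" using at by (simp add: rep_def)
    moreover have "degree (ts!i) = Suc k" using degree_rep[of i "ar a" a "ts!i"] i g(2) t
      \<open>t = rep a (ar a) i (ts!i)\<close> by (simp add: B_def)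
    moreover have "ts!i \<in> B G ar (Suc k)" using calculation g(3) nth_mem[OF i(1)]
      by (simp add: B_def)
    ultimately show "t \<in> (\<lambda>(a,i,t). rep a (ar a) i t) ` (SIGMA a:G. {..<ar a} \<times> B G ar (Suc k))"
      using g i by force
  qed
next
  show "(\<lambda>(a,i,t). rep a (ar a) i t) ` (SIGMA a:G. {..<ar a} \<times> B G ar (Suc k)) \<subseteq> B G ar (Suc (Suc k))"
    by (auto simp: B_def degree_rep stringy_rep gtree_rep)
qed

lemma rep_inj: "inj_on (\<lambda>(a,i,t). rep a (ar a) i t) (SIGMA a:G. {..<ar a} \<times> B G ar (Suc k))"
proof (rule inj_onI)
  fix x y
  assume hx: "x \<in> (SIGMA a:G. {..<ar a} \<times> B G ar (Suc k))" and hy: "y \<in> (SIGMA a:G. {..<ar a} \<times> B G ar (Suc k))"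
    and he: "(\<lambda>(a,i,t). rep a (ar a) i t) x = (\<lambda>(a,i,t). rep a (ar a) i t) y"
  obtain a i t where x: "x = (a,i,t)" by (cases x) auto
  obtain a' i' t' where y: "y = (a',i',t')" by (cases y) auto
  have h: "a \<in> G" "i < ar a" "t \<in> B G ar (Suc k)" "a' \<in> G" "i' < ar a'" "t' \<in> B G ar (Suc k)"
    "rep a (ar a) i t = rep a' (ar a') i' t'" using hx hy he x y by auto
  have aa: "a = a'" and l: "(replicate (ar a) Leaf)[i:=t] = (replicate (ar a) Leaf)[i':=t']"
    using h(7) by (auto simp: rep_def)
  have tl: "t \<noteq> Leaf" "t' \<noteq> Leaf" using h(3,6) by (auto simp: B_def)
  have "i = i'"
  proof (rule ccontr)
    assume "i \<noteq> i'"
    have "(replicate (ar a) Leaf)[i:=t] ! i = t" using h(2) by simp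
    moreover have "(replicate (ar a) Leaf)[i':=t'] ! i = Leaf" using h(2) \<open>i \<noteq> i'\<close> by simp
    ultimately show False using l tl by simp
  qed
  moreover have "t = t'" using l h(2) \<open>i = i'\<close> by (metis nth_list_update_eq length_replicate)
  ultimately show "x = y" using aa x y by simp
qed

lemma B_card: "finite G \<Longrightarrow> finite (B G ar (Suc k)) \<and> card (B G ar (Suc k)) = card G * (\<Sum>a\<in>G. ar a) ^ k"
proof (induction k)
  case 0
  have "inj_on (\<lambda>a. Node a (replicate (ar a) Leaf)) G" by (rule inj_onI) simp
  thus ?case using 0 B1[of G ar, unfolded One_nat_def] by (simp add: card_image)
next
  case (Suc k)
  have fin: "finite (SIGMA a:G. {..<ar a} \<times> B G ar (Suc k))" using Suc by auto
  have "card (SIGMA a:G. {..<ar a} \<times> B G ar (Suc k)) = (\<Sum>a\<in>G. ar a * card (B G ar (Suc k)))"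
    using Suc by (simp add: card_SigmaI card_cartesian_product)
  also have "\<dots> = (\<Sum>a\<in>G. ar a) * card (B G ar (Suc k))" by (simp add: sum_distrib_right)
  finally show ?case using Suc fin by (simp add: BSuc card_image[OF rep_inj])
qed


theorem proposition3p6:
  fixes G :: "'a set" and ar :: "'a \<Rightarrow> nat"
  assumes "finite G"
    and "\<And>a. a \<in> G \<Longrightarrow> ar a \<ge> 1"
  shows "{t. is_gtree G ar t \<and> co_irreducible G ar t} = {t. is_gtree G ar t \<and> stringy t} \<and>
         (\<forall>d\<ge>1.
           card {t. is_gtree G ar t \<and> co_irreducible G ar t \<and> degree t = d}
             = card G * (\<Sum>a\<in>G. ar a) ^ (d - 1))"
proof (intro conjI allI impI)
  show "{t. is_gtree G ar t \<and> co_irreducible G ar t} = {t. is_gtree G ar t \<and> stringy t}"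
    using coirr_iff by blast
next
  fix d :: nat assume "d \<ge> 1"
  then obtain k where d: "d = Suc k" by (cases d) auto
  have "{t. is_gtree G ar t \<and> co_irreducible G ar t \<and> degree t = d} = B G ar (Suc k)"
    using coirr_iff d unfolding B_def by blast
  thus "card {t. is_gtree G ar t \<and> co_irreducible G ar t \<and> degree t = d}
             = card G * (\<Sum>a\<in>G. ar a) ^ (d - 1)"
    using B_card[OF assms(1), of ar k] d by simp
qed

end
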